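(* Consider the stochastic epidemic model described in the context under the linear control policy $u(k)=K\,I(k)$, $k\ge0$, with a constant gain $K$. Suppose $$\overline{\delta}<\frac{(1-d_{\max})\,\overline{v}}{v_{\max}}\qquad\text{and}\qquad \frac{\overline{\delta}-\overline{d_I}}{\overline{v}}<K<\frac{1-d_{\max}}{v_{\max}}.$$ Then: (i) $\lim_{k\to\infty}\mathbb{E}[I(k)]/I_0=0$; (ii) $\mathbb{E}[I(k)]\le I_0$ for all $k\ge 0$; (iii) if $K=(\overline{\delta}-\overline{d_I})/\overline{v}$, then $\mathbb{E}[I(k)]=I_0$ for all $k$.
   Context: Time is indexed by days $k=0,1,2,\dots$. Let $(\delta(k))_{k\ge0}$, $(d_I(k))_{k\ge0}$, $(v(k))_{k\ge0}$ be three mutually independent sequences of random variables, each sequence i.i.d. in $k$, with $0\le \delta(k)\le \delta_{\max}$, $0\le d_I(k)\le d_{\max}$ where $d_{\max}<1$, and $0<v_{\min}\le v(k)\le v_{\max}\le 1$; moreover $\delta_{\max}$ lies in the support of $\delta(k)$, $d_{\max}$ in the support of $d_I(k)$, and $v_{\min},v_{\max}$ in the support of $v(k)$. Write $\overline{\delta}=\mathbb{E}[\delta(k)]$, $\overline{d_I}=\mathbb{E}[d_I(k)]$, $\overline{v}=\mathbb{E}[v(k)]$. Given a control sequence $u(k)\ge 0$, the susceptible, infected, recovered and deceased cases evolve by $S(k+1)=S(k)-\delta(k)I(k)$, $I(k+1)=(1+\delta(k))I(k)-v(k)u(k)-d_I(k)I(k)$, $R(k+1)=R(k)+v(k)u(k)$,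 $D(k+1)=D(k)+d_I(k)I(k)$, with initial values $S(0)=S_0$, $I(0)=I_0>0$, $R(0)=D(0)=0$, where $I_0\delta_{\max}<S_0$. *)

theory Defs
  imports "HOL-Probability.Probability"
begin

primrec sird ::
  "real \<Rightarrow> real \<Rightarrow> (nat \<Rightarrow> 'a \<Rightarrow> real) \<Rightarrow> (nat \<Rightarrow> 'a \<Rightarrow> real) \<Rightarrow> (nat \<Rightarrow> 'a \<Rightarrow> real)
   \<Rightarrow> (real \<times> real \<times> real \<times> real \<Rightarrow> real) \<Rightarrow> nat \<Rightarrow> 'a \<Rightarrow> real \<times> real \<times> real \<times> real" where
  "sird S0 I0 \<delta> dI v pol 0 \<omega> = (S0, I0, 0, 0)"
| "sird S0 I0 \<delta> dI v pol (Suc k) \<omega> =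
     (case sird S0 I0 \<delta> dI v pol k \<omega> of (S, I, R, D) \<Rightarrow>
        (let u = pol (S, I, R, D) in
          (S - \<delta> k \<omega> * I,
           (1 + \<delta> k \<omega>) * I - v k \<omega> * u - dI k \<omega> * I,
           R + v k \<omega> * u,
           D + dI k \<omega> * I)))"

definition infected_lin ::
  "real \<Rightarrow> real \<Rightarrow> (nat \<Rightarrow> 'a \<Rightarrow> real) \<Rightarrow> (nat \<Rightarrow> 'a \<Rightarrow> real) \<Rightarrow> (nat \<Rightarrow> 'a \<Rightarrow> real)
   \<Rightarrow> real \<Rightarrow> nat \<Rightarrow> 'a \<Rightarrow> real" where
  "infected_lin S0 I0 \<delta> dI v K k \<omega> =
     fst (snd (sird S0 I0 \<delta> dI v (\<lambda>(S, I, R, D). K * I) k \<omega>))"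

definition joint_family ::
  "(nat \<Rightarrow> 'a \<Rightarrow> real) \<Rightarrow> (nat \<Rightarrow> 'a \<Rightarrow> real) \<Rightarrow> (nat \<Rightarrow> 'a \<Rightarrow> real) \<Rightarrow> nat \<times> nat \<Rightarrow> 'a \<Rightarrow> real" where
  "joint_family \<delta> dI v = (\<lambda>(j, k). if j = 0 then \<delta> k else if j = 1 then dI k else v k)"

definition in_support :: "'a measure \<Rightarrow> ('a \<Rightarrow> real) \<Rightarrow> real \<Rightarrow> bool" where
  "in_support M X x \<longleftrightarrow> (\<forall>e>0. measure M {\<omega> \<in> space M. \<bar>X \<omega> - x\<bar> < e} > 0)"

end

theory Submission
  imports Defs
begin

lemma infected_prod:
  "infected_lin S0 I0 \<delta> dI v K k \<omega> = I0 * (\<Prod>j<k. 1 + \<delta> j \<omega> - K * v j \<omega> - dI j \<omega>)"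
proof (induction k)
  case 0 then show ?case by (simp add: infected_lin_def)
next
  case (Suc k)
  have "infected_lin S0 I0 \<delta> dI v K (Suc k) \<omega> = infected_lin S0 I0 \<delta> dI v K k \<omega> * (1 + \<delta> k \<omega> - K * v k \<omega> - dI k \<omega>)"
    unfolding infected_lin_def by (simp split: prod.split add: algebra_simps)
  then show ?case using Suc by simp
qed

lemma indep_factors:
  assumes P: "prob_space M"
    and indep: "prob_space.indep_vars M (\<lambda>_. borel) (joint_family \<delta> dI v) ({0, 1, 2} \<times> UNIV)"
  shows "prob_space.indep_vars M (\<lambda>_. borel) (\<lambda>j \<omega>. 1 + \<delta> j \<omega> - K * v j \<omega> - dI j \<omega>) UNIV"
proof -
  interpret prob_space M by (rule P)
  define KK where "KK j = ({0,1,2} \<times> {j} :: (nat \<times> nat) set)" for j :: nat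
  have r: "indep_vars (\<lambda>j. PiM (KK j) (\<lambda>_. borel)) (\<lambda>j \<omega>. restrict (\<lambda>i. joint_family \<delta> dI v i \<omega>) (KK j)) UNIV"
    by (rule indep_vars_restrict[OF indep]) (auto simp: KK_def disjoint_family_on_def)
  define Y where "Y j f = 1 + f (0::nat, j) - K * f (2, j) - f (1, j)" for j and f :: "nat \<times> nat \<Rightarrow> real"
  have m: "Y j \<in> borel_measurable (PiM (KK j) (\<lambda>_. borel))" for j
    unfolding Y_def KK_def by measurable
  have "indep_vars (\<lambda>_. borel) (\<lambda>j x. Y j (restrict (\<lambda>i. joint_family \<delta> dI v i x) (KK j))) UNIV"
    by (rule indep_vars_compose2[OF r m])
  moreover have "(\<lambda>j x. Y j (restrict (\<lambda>i. joint_family \<delta> dI v i x) (KK j))) = (\<lambda>j \<omega>. 1 + \<delta> j \<omega> - K * v j \<omega> - dI j \<omega>)"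
    by (auto simp: Y_def KK_def joint_family_def fun_eq_iff)
  ultimately show ?thesis by simp
qed

theorem theorem2:
  fixes M :: "'a measure"
    and \<delta> dI v :: "nat \<Rightarrow> 'a \<Rightarrow> real"
    and \<delta>max dmax vmin vmax S0 I0 K :: real
  assumes P: "prob_space M"
    and rv: "\<And>k. \<delta> k \<in> borel_measurable M" "\<And>k. dI k \<in> borel_measurable M"
            "\<And>k. v k \<in> borel_measurable M"
    and indep: "prob_space.indep_vars M (\<lambda>_. borel) (joint_family \<delta> dI v) ({0, 1, 2} \<times> UNIV)"
    and ident: "\<And>k. distr M borel (\<delta> k) = distr M borel (\<delta> 0)"
               "\<And>k. distr M borel (dI k) = distr M borel (dI 0)"
               "\<And>k. distr M borel (v k) = distr M borel (v 0)"
    and bd_delta: "\<And>k \<omega>. \<omega> \<in> space M \<Longrightarrow> 0 \<le> \<delta> k \<omega> \<and> \<delta> k \<omega> \<le> \<delta>max"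
    and bd_dI: "\<And>k \<omega>. \<omega> \<in> space M \<Longrightarrow> 0 \<le> dI k \<omega> \<and> dI k \<omega> \<le> dmax"
    and bd_v: "\<And>k \<omega>. \<omega> \<in> space M \<Longrightarrow> vmin \<le> v k \<omega> \<and> v k \<omega> \<le> vmax"
    and dmax_lt: "dmax < 1"
    and vmin_pos: "0 < vmin" and vmax_le: "vmax \<le> 1"
    and supp: "\<And>k. in_support M (\<delta> k) \<delta>max" "\<And>k. in_support M (dI k) dmax"
              "\<And>k. in_support M (v k) vmin" "\<And>k. in_support M (v k) vmax"
    and I0_pos: "0 < I0"
    and S0_gt: "I0 * \<delta>max < S0"
    and cond1: "(\<integral>\<omega>. \<delta> 0 \<omega> \<partial>M) < (1 - dmax) * (\<integral>\<omega>. v 0 \<omega> \<partial>M) / vmax"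
    and K_upper: "K < (1 - dmax) / vmax"
  shows "(((\<integral>\<omega>. \<delta> 0 \<omega> \<partial>M) - (\<integral>\<omega>. dI 0 \<omega> \<partial>M)) / (\<integral>\<omega>. v 0 \<omega> \<partial>M) < K \<longrightarrow>
            ((\<lambda>k. (\<integral>\<omega>. infected_lin S0 I0 \<delta> dI v K k \<omega> \<partial>M) / I0) \<longlonglongrightarrow> 0)
          \<and> (\<forall>k. (\<integral>\<omega>. infected_lin S0 I0 \<delta> dI v K k \<omega> \<partial>M) \<le> I0))
       \<and> (K = ((\<integral>\<omega>. \<delta> 0 \<omega> \<partial>M) - (\<integral>\<omega>. dI 0 \<omega> \<partial>M)) / (\<integral>\<omega>. v 0 \<omega> \<partial>M) \<longrightarrow>
            (\<forall>k. (\<integral>\<omega>. infected_lin S0 I0 \<delta> dI v K k \<omega> \<partial>M) = I0))"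
proof -
  interpret prob_space M by (rule P)
  define F where "F j \<omega> = 1 + \<delta> j \<omega> - K * v j \<omega> - dI j \<omega>" for j \<omega>
  define db where "db = (\<integral>\<omega>. \<delta> 0 \<omega> \<partial>M)"
  define ib where "ib = (\<integral>\<omega>. dI 0 \<omega> \<partial>M)"
  define vb where "vb = (\<integral>\<omega>. v 0 \<omega> \<partial>M)"
  define a where "a = 1 + db - K * vb - ib"
  have same: "(\<integral>\<omega>. X j \<omega> \<partial>M) = (\<integral>\<omega>. X 0 \<omega> \<partial>M)"
    if "\<And>k. X k \<in> borel_measurable M" "\<And>k. distr M borel (X k) = distr M borel (X 0)" for X :: "nat \<Rightarrow> 'a \<Rightarrow> real" and j
  proof -
    have "(\<integral>\<omega>. X j \<omega> \<partial>M) = (\<integral>x. x \<partial>distr M borel (X j))"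
      by (rule integral_distr[symmetric]) (auto simp: that)
    also have "\<dots> = (\<integral>x. x \<partial>distr M borel (X 0))" by (simp add: that(2)[of j])
    also have "\<dots> = (\<integral>\<omega>. X 0 \<omega> \<partial>M)"
      by (rule integral_distr) (auto simp: that)
    finally show ?thesis .
  qed
  have intd: "integrable M (\<delta> j)" for j
    by (rule integrable_const_bound[where B=\<delta>max]) (use bd_delta rv in auto)
  have inti: "integrable M (dI j)" for j
    by (rule integrable_const_bound[where B=dmax]) (use bd_dI rv in auto)
  have intv: "integrable M (v j)" for j
  proof (rule integrable_const_bound[where B=vmax])
    have "\<bar>v j x\<bar> \<le> vmax" if "x \<in> space M" for x
      using bd_v[OF that, of j] vmin_pos by auto
    then show "AE x in M. norm (v j x) \<le> vmax" by auto
  qed (use rv in auto)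
  have intF: "integrable M (F j)" for j
    unfolding F_def using intd inti intv by auto
  have EF: "(\<integral>\<omega>. F j \<omega> \<partial>M) = a" for j
  proof -
    have "(\<integral>\<omega>. F j \<omega> \<partial>M) = 1 + (\<integral>\<omega>. \<delta> j \<omega> \<partial>M) - K * (\<integral>\<omega>. v j \<omega> \<partial>M) - (\<integral>\<omega>. dI j \<omega> \<partial>M)"
      unfolding F_def using intd[of j] inti[of j] intv[of j] by (simp add: prob_space)
    also have "\<dots> = a" unfolding a_def db_def ib_def vb_def
      using same[of \<delta>, OF rv(1) ident(1), of j] same[of dI, OF rv(2) ident(2), of j] same[of v, OF rv(3) ident(3), of j] by simp
    finally show ?thesis .
  qed
  have indF: "indep_vars (\<lambda>_. borel) F UNIV"
    unfolding F_def by (rule indep_factors[OF P indep])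
  have EI: "(\<integral>\<omega>. infected_lin S0 I0 \<delta> dI v K k \<omega> \<partial>M) = I0 * a ^ k" for k
  proof -
    have "(\<integral>\<omega>. infected_lin S0 I0 \<delta> dI v K k \<omega> \<partial>M) = (\<integral>\<omega>. I0 * (\<Prod>j\<in>{..<k}. F j \<omega>) \<partial>M)"
      by (simp add: infected_prod F_def)
    also have "\<dots> = I0 * (\<integral>\<omega>. (\<Prod>j\<in>{..<k}. F j \<omega>) \<partial>M)" by simp
    also have "(\<integral>\<omega>. (\<Prod>j\<in>{..<k}. F j \<omega>) \<partial>M) = (\<Prod>j\<in>{..<k}. \<integral>\<omega>. F j \<omega> \<partial>M)"
      by (rule indep_vars_lebesgue_integral) (auto intro: indep_vars_subset[OF indF] intF)
    finally show ?thesis by (simp add: EF)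
  qed
  have db0: "0 \<le> db" unfolding db_def
    by (rule integral_nonneg_AE) (use bd_delta in auto)
  have ibm: "ib \<le> dmax" unfolding ib_def
    by (rule integral_le_const) (use bd_dI inti in auto)
  have ib0: "0 \<le> ib" unfolding ib_def
    by (rule integral_nonneg_AE) (use bd_dI in auto)
  have vbm: "vb \<le> vmax" unfolding vb_def
    by (rule integral_le_const) (use bd_v intv in auto)
  have vb0: "vmin \<le> vb" unfolding vb_def
    by (rule integral_ge_const) (use bd_v intv in auto)
  have apos: "0 < a"
  proof (cases "K \<ge> 0")
    case True
    have "K * vmax < 1 - dmax" using K_upper vmin_pos vb0 vbm
      by (simp add: pos_less_divide_eq)
    moreover have "K * vb \<le> K * vmax" using True vbm by (simp add: mult_left_mono)
    ultimately show ?thesis unfolding a_def using db0 ibm by linarith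
  next
    case False
    then have "K * vb \<le> 0" using vb0 vmin_pos by (simp add: mult_nonpos_nonneg)
    then show ?thesis unfolding a_def using db0 ibm dmax_lt by linarith
  qed
  have vbpos: "0 < vb" using vb0 vmin_pos by linarith
  show ?thesis
  proof (intro conjI impI allI)
    assume h: "((\<integral>\<omega>. \<delta> 0 \<omega> \<partial>M) - (\<integral>\<omega>. dI 0 \<omega> \<partial>M)) / (\<integral>\<omega>. v 0 \<omega> \<partial>M) < K"
    then have "db - ib < K * vb" using vbpos unfolding db_def ib_def vb_def by (simp add: divide_less_eq)
    then have a1: "a < 1" unfolding a_def by linarith
    have "(\<lambda>k. a ^ k) \<longlonglongrightarrow> 0" by (rule LIMSEQ_power_zero) (use apos a1 in auto)
    then show "(\<lambda>k. (\<integral>\<omega>. infected_lin S0 I0 \<delta> dI v K k \<omega> \<partial>M) / I0) \<longlonglongrightarrow> 0"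
      using I0_pos by (simp add: EI)
    fix k
    have "a ^ k \<le> 1" using apos a1 by (simp add: power_le_one)
    then show "(\<integral>\<omega>. infected_lin S0 I0 \<delta> dI v K k \<omega> \<partial>M) \<le> I0"
      using I0_pos by (simp add: EI mult_left_le)
  next
    fix k
    assume h: "K = ((\<integral>\<omega>. \<delta> 0 \<omega> \<partial>M) - (\<integral>\<omega>. dI 0 \<omega> \<partial>M)) / (\<integral>\<omega>. v 0 \<omega> \<partial>M)"
    then have "K * vb = db - ib" using vbpos unfolding db_def ib_def vb_def by simp
    then have "a = 1" unfolding a_def by linarith
    then show "(\<integral>\<omega>. infected_lin S0 I0 \<delta> dI v K k \<omega> \<partial>M) = I0" by (simp add: EI)
  qed
qed

end
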